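(* $\mathbf{REG}\subset\mathbf{GRLOWJ}$, i.e., every regular language is accepted by some GRLOWJFA, and the inclusion is proper.
   Context: $\mathbf{REG}$ is the class of regular languages. "Subword" means a contiguous factor. A GRLOWJFA is a tuple $\mathcal{A}=(\Sigma,Q,q_0,F,R)$ with $\Sigma$ a finite alphabet, $Q$ a finite state set, $q_0\in Q$, $F\subseteq Q$, and $R\subset Q\times\Sigma^+\times Q$ a finite set of rules such that for each $p\in Q$, $w\in\Sigma^+$ at most one $q$ has $(p,w,q)\in R$ (meaning: go from $p$ to $q$ deleting $w$). $\Sigma_p=\{w:(p,w,q)\in R\text{ for some }q\}$. Configurations lie in $\Sigma^*Q\Sigma^*$. Moves $\curvearrowright$: (1) for $t,u,v\in\Sigma^*$ and $(p,x,q)\in R$: $tpuxv\curvearrowright tuqv$ provided $u$ contains no word of $\Sigma_p$ as a subword and there are no $u_1,x_2\in\Sigma^*$, $u_2,x_1\in\Sigma^+$ with $u=u_1u_2$, $x=x_1x_2$, $u_2x_1=x$; (2) for $x\in\Sigma^+$, $y\in\Sigma^*$ with $y$ containing no word of $\Sigma_p$ as a subword: $xpy\curvearrowright pxy$. $L_{GRL}(\mathcal{A})=\{w\in\Sigma^*: q_0w\curvearrowright^* q_f \text{ for some } q_f\in F\}$. $\mathbf{GRLOWJ}$ is the class of languages so accepted. *)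

theory Defs
  imports Main "HOL-Library.Sublist"
begin

(* Regular languages over a (finite) alphabet S, via DFAs with a finite state set
   (states taken from nat, i.e. up to renaming). *)
definition dfa_lang :: "'a set \<Rightarrow> 'q \<Rightarrow> 'q set \<Rightarrow> ('q \<Rightarrow> 'a \<Rightarrow> 'q) \<Rightarrow> 'a list set" where
  "dfa_lang S q0 F \<delta> = {w \<in> lists S. foldl \<delta> q0 w \<in> F}"

definition REG :: "'a set \<Rightarrow> 'a list set set" where
  "REG S = {L. \<exists>(Q::nat set) q0 F \<delta>. finite Q \<and> q0 \<in> Q \<and> F \<subseteq> Q \<and>
      (\<forall>q\<in>Q. \<forall>a\<in>S. \<delta> q a \<in> Q) \<and> L = dfa_lang S q0 F \<delta>}"

definition is_grlowjfa :: "'a set \<Rightarrow> 'q set \<Rightarrow> 'q \<Rightarrow> 'q set \<Rightarrow> ('q \<times> 'a list \<times> 'q) set \<Rightarrow> bool" where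
  "is_grlowjfa S Q q0 F R \<longleftrightarrow> finite S \<and> finite Q \<and> q0 \<in> Q \<and> F \<subseteq> Q \<and> finite R \<and>
     R \<subseteq> Q \<times> {w. w \<in> lists S \<and> w \<noteq> []} \<times> Q \<and>
     (\<forall>p w q q'. (p, w, q) \<in> R \<longrightarrow> (p, w, q') \<in> R \<longrightarrow> q = q')"

definition Sigma_p :: "('q \<times> 'a list \<times> 'q) set \<Rightarrow> 'q \<Rightarrow> 'a list set" where
  "Sigma_p R p = {w. \<exists>q. (p, w, q) \<in> R}"

definition no_sub :: "('q \<times> 'a list \<times> 'q) set \<Rightarrow> 'q \<Rightarrow> 'a list \<Rightarrow> bool" where
  "no_sub R p u \<longleftrightarrow> (\<forall>w \<in> Sigma_p R p. \<not> sublist w u)"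

definition overlap :: "'a list \<Rightarrow> 'a list \<Rightarrow> bool" where
  "overlap u x \<longleftrightarrow> (\<exists>u1 u2 x1 x2. u = u1 @ u2 \<and> x = x1 @ x2 \<and> u2 \<noteq> [] \<and> x1 \<noteq> [] \<and> u2 @ x1 = x)"

(* Configurations t p v (t,v words, p a state) are represented as triples (t, p, v). *)
definition grl_move :: "('q \<times> 'a list \<times> 'q) set \<Rightarrow> ('a list \<times> 'q \<times> 'a list) \<Rightarrow> ('a list \<times> 'q \<times> 'a list) \<Rightarrow> bool" where
  "grl_move R c c' \<longleftrightarrow>
     (\<exists>t p u x v q. c = (t, p, u @ x @ v) \<and> c' = (t @ u, q, v) \<and> (p, x, q) \<in> R \<and>
        no_sub R p u \<and> \<not> overlap u x)
   \<or> (\<exists>x p y. c = (x, p, y) \<and> c' = ([], p, x @ y) \<and> x \<noteq> [] \<and> no_sub R p y)"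

definition grl_lang :: "'a set \<Rightarrow> 'q \<Rightarrow> 'q set \<Rightarrow> ('q \<times> 'a list \<times> 'q) set \<Rightarrow> 'a list set" where
  "grl_lang S q0 F R = {w \<in> lists S. \<exists>qf \<in> F. (grl_move R)\<^sup>*\<^sup>* ([], q0, w) ([], qf, [])}"

definition GRLOWJ :: "'a set \<Rightarrow> 'a list set set" where
  "GRLOWJ S = {L. \<exists>(Q::nat set) q0 F R. is_grlowjfa S Q q0 F R \<and> L = grl_lang S q0 F R}"

end

theory Submission
  imports Defs
begin

lemma sublist_single_iff: "sublist [c] u \<longleftrightarrow> c \<in> set u"
proof
  assume "sublist [c] u" then show "c \<in> set u" by (auto simp: sublist_def)
next
  assume "c \<in> set u"
  then obtain xs ys where "u = xs @ c # ys" by (meson split_list)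
  then show "sublist [c] u" unfolding sublist_def by auto
qed

lemma overlap_single: "\<not> overlap u [c]"
  unfolding overlap_def by (auto simp: Cons_eq_append_conv append_eq_Cons_conv)

definition dR :: "'a set \<Rightarrow> nat set \<Rightarrow> (nat \<Rightarrow> 'a \<Rightarrow> nat) \<Rightarrow> (nat \<times> 'a list \<times> nat) set" where
  "dR S Q \<delta> = (\<lambda>(p,a). (p,[a],\<delta> p a)) ` (Q \<times> S)"

lemma dR_step:
  assumes "p \<in> Q" "w \<in> lists S" "grl_move (dR S Q \<delta>) ([],p,w) c'"
  shows "\<exists>b v. w = b # v \<and> c' = ([], \<delta> p b, v)"
proof -
  from assms(3) consider
    (m1) t p' u x v q where "([],p,w) = (t, p', u @ x @ v)" "c' = (t @ u, q, v)"
       "(p', x, q) \<in> dR S Q \<delta>" "no_sub (dR S Q \<delta>) p' u" "\<not> overlap u x"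
    | (m2) x p' y where "([],p,w) = (x, p', y)" "c' = ([], p', x @ y)" "x \<noteq> []"
    unfolding grl_move_def by blast
  then show ?thesis
  proof cases
    case m1
    then have t: "t = []" "p' = p" "w = u @ x @ v" by auto
    from m1(3) t obtain a where a: "x = [a]" "q = \<delta> p a" "a \<in> S"
      by (auto simp: dR_def)
    have "u = []"
    proof (rule ccontr)
      assume "u \<noteq> []"
      then obtain c u' where u: "u = c # u'" by (cases u) auto
      with t assms(2) have "c \<in> S" by auto
      then have "[c] \<in> Sigma_p (dR S Q \<delta>) p" using assms(1)
        unfolding Sigma_p_def dR_def by force
      moreover have "sublist [c] u" using u by (simp add: sublist_single_iff)
      ultimately show False using m1(4) t unfolding no_sub_def by blast
    qed
    then show ?thesis using t a m1(2) by auto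
  next
    case m2
    then show ?thesis by auto
  qed
qed

lemma dR_move:
  assumes "p \<in> Q" "b \<in> S"
  shows "grl_move (dR S Q \<delta>) ([],p,b # v) ([], \<delta> p b, v)"
proof -
  have "(p, [b], \<delta> p b) \<in> dR S Q \<delta>" using assms unfolding dR_def by force
  moreover have "no_sub (dR S Q \<delta>) p []"
    unfolding no_sub_def Sigma_p_def dR_def by auto
  ultimately show ?thesis unfolding grl_move_def
    by (metis append_Cons append_Nil overlap_single)
qed

lemma dR_star:
  assumes "p \<in> Q" "w \<in> lists S" "\<forall>q\<in>Q. \<forall>a\<in>S. \<delta> q a \<in> Q"
  shows "(grl_move (dR S Q \<delta>))\<^sup>*\<^sup>* ([],p,w) ([],qf,[]) \<longleftrightarrow> qf = foldl \<delta> p w"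
  using assms(1,2)
proof (induction w arbitrary: p)
  case Nil
  show ?case
  proof
    assume "(grl_move (dR S Q \<delta>))\<^sup>*\<^sup>* ([],p,[]) ([],qf,[])"
    then show "qf = foldl \<delta> p []"
      by (cases rule: converse_rtranclpE) (use dR_step[OF Nil.prems] in auto)
  qed auto
next
  case (Cons b v)
  have b: "b \<in> S" "v \<in> lists S" using Cons.prems by auto
  have pb: "\<delta> p b \<in> Q" using assms(3) Cons.prems b by auto
  note IH = Cons.IH[OF pb b(2)]
  show ?case
  proof
    assume "(grl_move (dR S Q \<delta>))\<^sup>*\<^sup>* ([],p,b#v) ([],qf,[])"
    then show "qf = foldl \<delta> p (b#v)"
    proof (cases rule: converse_rtranclpE)
      case (step c)
      with dR_step[OF Cons.prems] have "c = ([], \<delta> p b, v)" by auto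
      with step IH show ?thesis by simp
    qed auto
  next
    assume "qf = foldl \<delta> p (b#v)"
    then have "(grl_move (dR S Q \<delta>))\<^sup>*\<^sup>* ([],\<delta> p b,v) ([],qf,[])" using IH by simp
    then show "(grl_move (dR S Q \<delta>))\<^sup>*\<^sup>* ([],p,b#v) ([],qf,[])"
      using dR_move[OF Cons.prems(1) b(1)] by (meson converse_rtranclp_into_rtranclp)
  qed
qed

lemma part1:
  assumes "finite S"
  shows "REG S \<subseteq> GRLOWJ S"
proof
  fix L assume "L \<in> REG S"
  then obtain Q :: "nat set" and q0 F \<delta> where H: "finite Q" "q0 \<in> Q" "F \<subseteq> Q"
    "\<forall>q\<in>Q. \<forall>a\<in>S. \<delta> q a \<in> Q" "L = dfa_lang S q0 F \<delta>"
    unfolding REG_def by blast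
  have "is_grlowjfa S Q q0 F (dR S Q \<delta>)"
    unfolding is_grlowjfa_def using H assms
    by (auto simp: dR_def)
  moreover have "L = grl_lang S q0 F (dR S Q \<delta>)"
  proof -
    have "\<And>w. w \<in> lists S \<Longrightarrow> (foldl \<delta> q0 w \<in> F) =
       (\<exists>qf\<in>F. (grl_move (dR S Q \<delta>))\<^sup>*\<^sup>* ([], q0, w) ([], qf, []))"
      using dR_star[OF H(2) _ H(4)] by auto
    then show ?thesis unfolding H(5) dfa_lang_def grl_lang_def
      by (intro Collect_cong) (metis (no_types))
  qed
  ultimately show "L \<in> GRLOWJ S" unfolding GRLOWJ_def by blast
qed

definition cnt :: "nat \<Rightarrow> nat list \<Rightarrow> nat" where
  "cnt c w = length (filter ((=) c) w)"

definition L2 :: "nat list set" where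
  "L2 = {w \<in> lists {0,1}. cnt 0 w = cnt 1 w}"

definition R2 :: "(nat \<times> nat list \<times> nat) set" where
  "R2 = {(0,[0],1),(1,[1],0)}"

definition bal :: "nat list \<Rightarrow> nat \<Rightarrow> int" where
  "bal w s = int (cnt 0 w) - int (cnt 1 w) + int s"

lemma Sigma_R2: "s \<in> {0,1} \<Longrightarrow> Sigma_p R2 s = {[s]}"
  unfolding Sigma_p_def R2_def by auto

lemma no_sub_R2: "s \<in> {0,1} \<Longrightarrow> no_sub R2 s u \<longleftrightarrow> s \<notin> set u"
  unfolding no_sub_def by (simp add: Sigma_R2 sublist_single_iff)

lemma R2_move1:
  assumes "s \<in> {0,1}" "s \<notin> set u"
  shows "grl_move R2 (t, s, u @ s # v) (t @ u, 1 - s, v)"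
proof -
  have "(s, [s], 1 - s) \<in> R2" using assms(1) unfolding R2_def by auto
  moreover have "no_sub R2 s u" using assms by (simp add: no_sub_R2)
  ultimately show ?thesis unfolding grl_move_def
    by (metis append_Cons append_Nil overlap_single)
qed

lemma R2_jump:
  assumes "s \<in> {0,1}" "s \<notin> set v" "t \<noteq> []"
  shows "grl_move R2 (t, s, v) ([], s, t @ v)"
  using assms unfolding grl_move_def by (simp add: no_sub_R2)

lemma R2_step_inv:
  assumes "grl_move R2 (t, s, w) (t', s', w')" "s \<in> {0,1}"
  shows "s' \<in> {0,1} \<and> bal (t' @ w') s' = bal (t @ w) s"
proof -
  from assms consider
    (m1) u x v where "w = u @ x @ v" "t' = t @ u" "w' = v" "(s, x, s') \<in> R2"
    | (m2) "t' = []" "s' = s" "w' = t @ w"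
    unfolding grl_move_def by blast
  then show ?thesis
  proof cases
    case m1
    then show ?thesis unfolding R2_def bal_def cnt_def by auto
  next
    case m2
    then show ?thesis using assms(2) by simp
  qed
qed

lemma R2_star_inv:
  assumes "(grl_move R2)\<^sup>*\<^sup>* ([], 0, w) c"
  shows "case c of (t, s, v) \<Rightarrow> s \<in> {0,1} \<and> bal (t @ v) s = bal w 0"
  using assms
proof (induction rule: rtranclp_induct)
  case base
  then show ?case by simp
next
  case (step y z)
  obtain t s v where y: "y = (t, s, v)" by (cases y) auto
  obtain t' s' v' where z: "z = (t', s', v')" by (cases z) auto
  from R2_step_inv[of t s v t' s' v'] step y z show ?case by auto
qed

lemma no_s_bal:
  assumes "x \<in> lists {0,1}" "s \<in> {0::nat,1}" "s \<notin> set x" "bal x s = 0"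
  shows "s = 0 \<and> x = []"
proof (cases "s = 0")
  case True
  then have "\<forall>y\<in>set x. y = 1" using assms by auto
  then have "cnt 0 x = 0" "cnt 1 x = length x"
    unfolding cnt_def by (auto simp: filter_empty_conv filter_id_conv)
  then show ?thesis using assms(4) True unfolding bal_def by auto
next
  case False
  then have s: "s = 1" using assms by auto
  then have "\<forall>y\<in>set x. y = 0" using assms by auto
  then have "cnt 1 x = 0" unfolding cnt_def by (auto simp: filter_empty_conv)
  then show ?thesis using assms(4) s unfolding bal_def by auto
qed

lemma bal_del:
  assumes "s \<in> {0,1}"
  shows "bal (a @ s # b) s = bal (a @ b) (1 - s)"
  using assms unfolding bal_def cnt_def by auto

lemma R2_reach:
  "length (t @ v) = n \<Longrightarrow> t @ v \<in> lists {0,1} \<Longrightarrow> s \<in> {0,1} \<Longrightarrow> bal (t @ v) s = 0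
   \<Longrightarrow> (grl_move R2)\<^sup>*\<^sup>* (t, s, v) ([], 0, [])"
proof (induction n arbitrary: t s v rule: less_induct)
  case (less n)
  have s1: "1 - s \<in> {0,1}" using less.prems by auto
  show ?case
  proof (cases "s \<in> set v")
    case True
    then obtain u v' where v: "v = u @ s # v'" "s \<notin> set u" by (meson split_list_first)
    have "(grl_move R2)\<^sup>*\<^sup>* (t @ u, 1 - s, v') ([], 0, [])"
      apply (rule less.IH[OF _ refl])
      using less.prems v s1 bal_del[of s "t @ u" v'] by auto
    then show ?thesis using R2_move1[OF less.prems(3) v(2), of t v'] v(1)
      by (meson converse_rtranclp_into_rtranclp)
  next
    case False
    show ?thesis
    proof (cases "t = []")
      case True
      then show ?thesis using no_s_bal[of v s] less.prems False by auto
    next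
      case tne: False
      have "s \<in> set (t @ v)"
        using no_s_bal[of "t @ v" s] less.prems tne by auto
      then obtain u v' where v: "t @ v = u @ s # v'" "s \<notin> set u" by (meson split_list_first)
      have l: "length (u @ v') < n" using arg_cong[OF v(1), of length] less.prems(1) by simp
      have li: "u @ v' \<in> lists {0,1}" using less.prems(2) unfolding v(1) by auto
      have b: "bal (u @ v') (1 - s) = 0"
        using less.prems(4) bal_del[OF less.prems(3), of u v'] unfolding v(1) by simp
      have "(grl_move R2)\<^sup>*\<^sup>* (u, 1 - s, v') ([], 0, [])"
        by (rule less.IH[OF l refl li s1 b])
      then have "(grl_move R2)\<^sup>*\<^sup>* ([], s, t @ v) ([], 0, [])"
        using R2_move1[OF less.prems(3) v(2), of "[]" v'] v(1)
        by (metis append_Nil converse_rtranclp_into_rtranclp)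
      then show ?thesis using R2_jump[OF less.prems(3) False tne]
        by (meson converse_rtranclp_into_rtranclp)
    qed
  qed
qed

lemma L2_grl: "L2 = grl_lang {0,1} 0 {0} R2"
proof (intro set_eqI iffI)
  fix w assume "w \<in> L2"
  then have w: "w \<in> lists {0,1}" "bal w 0 = 0" unfolding L2_def bal_def by auto
  then have "(grl_move R2)\<^sup>*\<^sup>* ([], 0, w) ([], 0, [])"
    using R2_reach[of "[]" w "length w" 0] by simp
  then show "w \<in> grl_lang {0,1} 0 {0} R2" unfolding grl_lang_def using w(1) by blast
next
  fix w assume "w \<in> grl_lang {0,1} 0 {0} R2"
  then have "w \<in> lists {0,1}" "(grl_move R2)\<^sup>*\<^sup>* ([], 0, w) ([], 0, [])"
    unfolding grl_lang_def by blast+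
  from R2_star_inv[OF this(2)] have "bal w 0 = 0" by (simp add: bal_def cnt_def)
  then show "w \<in> L2" using \<open>w \<in> lists {0,1}\<close> unfolding L2_def bal_def by auto
qed

lemma L2_GRLOWJ: "L2 \<in> GRLOWJ {0,1}"
proof -
  have "is_grlowjfa {0,1} {0,1::nat} 0 {0} R2"
    unfolding is_grlowjfa_def R2_def by auto
  then show ?thesis unfolding GRLOWJ_def using L2_grl by blast
qed

lemma foldl_closed:
  "p \<in> Q \<Longrightarrow> w \<in> lists S \<Longrightarrow> \<forall>q\<in>Q. \<forall>a\<in>S. \<delta> q a \<in> Q \<Longrightarrow> foldl \<delta> p w \<in> Q"
  by (induction w arbitrary: p) auto

lemma cnt_rep: "cnt c (replicate i 0 @ replicate j 1) = (if c = 0 then i else if c = 1 then j else 0)"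
  unfolding cnt_def by auto

lemma L2_not_REG: "L2 \<notin> REG {0,1}"
proof
  assume "L2 \<in> REG {0,1}"
  then obtain Q :: "nat set" and q0 F \<delta> where H: "finite Q" "q0 \<in> Q" "F \<subseteq> Q"
    "\<forall>q\<in>Q. \<forall>a\<in>{0,1}. \<delta> q a \<in> Q" "L2 = dfa_lang {0,1} q0 F \<delta>"
    unfolding REG_def by blast
  define f where "f i = foldl \<delta> q0 (replicate i (0::nat))" for i
  have fQ: "f ` {..card Q} \<subseteq> Q"
  proof (rule image_subsetI)
    fix i show "f i \<in> Q" unfolding f_def by (rule foldl_closed[OF H(2) _ H(4)]) auto
  qed
  have "\<not> inj_on f {..card Q}"
  proof
    assume "inj_on f {..card Q}"
    from card_inj_on_le[OF this fQ H(1)] show False by simp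
  qed
  then obtain i j where ij: "i \<noteq> j" "f i = f j" unfolding inj_on_def by blast
  have mem: "replicate a 0 @ replicate b 1 \<in> L2 \<longleftrightarrow> a = b" for a b
    unfolding L2_def cnt_def by auto
  have "replicate i 0 @ replicate i 1 \<in> dfa_lang {0,1} q0 F \<delta>" using mem[of i i] H(5) by simp
  then have "foldl \<delta> (f i) (replicate i 1) \<in> F" unfolding dfa_lang_def f_def by simp
  then have "foldl \<delta> (f j) (replicate i 1) \<in> F" using ij by simp
  then have "replicate j 0 @ replicate i 1 \<in> dfa_lang {0,1} q0 F \<delta>"
    unfolding dfa_lang_def f_def by auto
  then have "replicate j 0 @ replicate i 1 \<in> L2" using H(5) by simp
  then show False using mem[of j i] ij by simp
qed

theorem proposition3:
  shows "(\<forall>S :: 'a set. finite S \<longrightarrow> REG S \<subseteq> GRLOWJ S) \<and>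
         (\<exists>(S :: nat set) L. finite S \<and> L \<in> GRLOWJ S \<and> L \<notin> REG S)"
proof (intro conjI allI impI)
  fix S :: "'a set" assume "finite S" then show "REG S \<subseteq> GRLOWJ S" by (rule part1)
next
  have "finite {0,1::nat} \<and> L2 \<in> GRLOWJ {0,1} \<and> L2 \<notin> REG {0,1}"
    using L2_GRLOWJ L2_not_REG by simp
  then show "\<exists>(S :: nat set) L. finite S \<and> L \<in> GRLOWJ S \<and> L \<notin> REG S" by (intro exI)
qed

end
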